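(* For integers $M\ge2$ and $\beta\in(0,1)$ let $C=\frac{1-\beta}{2M-1}$, $\mu_0=(M-1)C^{-1}$, $\sigma_0=\sqrt{\mu_0(C^{-1}-1)}$. Let $\hat Z_0=G+\min(N_1,N_2)$ where $G,N_1,N_2$ are independent, $G$ is geometric on $\{1,2,\dots\}$ with success probability $\beta$, and $N_1,N_2\sim\mathcal{N}(\mu_0,\sigma_0^2)$. Then $$\mathbb{E}[\hat Z_0]=\frac1\beta+\mu_0-\frac{\sigma_0}{\sqrt\pi}.$$ Moreover, if $\beta^*_M\in(0,1)$ denotes a minimizer of $\beta\mapsto\mathbb{E}[\hat Z_0]$ over $(0,1)$, then $M\beta^*_M\to\frac{\sqrt2}{2}$ as $M\to\infty$, i.e. $\beta^*_M\sim\frac{\sqrt2}{2M}$.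
   Context: This is the Gaussian approximation of the age of information at the node diametrically opposite the source in a ring of $2M$ nodes under the uniform Bernoulli policy: the source transmits its own information with probability $\beta$ and every other piece of information is transmitted with probability $C=(1-\beta)/(2M-1)$. *)

theory Defs
  imports "HOL-Probability.Probability"
begin

text \<open>Parameters of the uniform Bernoulli policy on a ring of 2M nodes.\<close>
definition C_par :: "nat \<Rightarrow> real \<Rightarrow> real" where
  "C_par M \<beta> = (1 - \<beta>) / (2 * real M - 1)"

definition mu0 :: "nat \<Rightarrow> real \<Rightarrow> real" where
  "mu0 M \<beta> = (real M - 1) * inverse (C_par M \<beta>)"

definition sigma0 :: "nat \<Rightarrow> real \<Rightarrow> real" where
  "sigma0 M \<beta> = sqrt (mu0 M \<beta> * (inverse (C_par M \<beta>) - 1))"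

text \<open>Law of G: geometric on {1,2,...} with success probability beta
  (P(G = k) = (1-beta)^(k-1) beta), i.e. 1 + the library geometric on {0,1,...}.\<close>
definition geom1 :: "real \<Rightarrow> nat measure" where
  "geom1 \<beta> = measure_pmf (map_pmf Suc (geometric_pmf \<beta>))"

definition normal0 :: "nat \<Rightarrow> real \<Rightarrow> real measure" where
  "normal0 M \<beta> = density lborel (normal_density (mu0 M \<beta>) (sigma0 M \<beta>))"

definition Z0_space :: "nat \<Rightarrow> real \<Rightarrow> (nat \<times> real \<times> real) measure" where
  "Z0_space M \<beta> = geom1 \<beta> \<Otimes>\<^sub>M (normal0 M \<beta> \<Otimes>\<^sub>M normal0 M \<beta>)"

definition Zhat0 :: "nat \<times> real \<times> real \<Rightarrow> real" where
  "Zhat0 = (\<lambda>(g, n1, n2). real g + min n1 n2)"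

definition EZhat0 :: "nat \<Rightarrow> real \<Rightarrow> real" where
  "EZhat0 M \<beta> = (\<integral>\<omega>. Zhat0 \<omega> \<partial>Z0_space M \<beta>)"

end

theory Submission imports Defs "HOL-Real_Asymp.Real_Asymp" begin

lemma marg_fst:
  assumes "prob_space A" "prob_space B"
  shows "distr (A \<Otimes>\<^sub>M B) A fst = A"
  using prob_space.distr_pair_fst[OF assms(2)] .

lemma marg_snd:
  assumes "prob_space A" "prob_space B"
  shows "distr (A \<Otimes>\<^sub>M B) B snd = B"
proof -
  interpret A: prob_space A by fact
  interpret B: prob_space B by fact
  interpret BA: pair_prob_space B A ..
  have "distr (A \<Otimes>\<^sub>M B) B snd = distr (distr (A \<Otimes>\<^sub>M B) (B \<Otimes>\<^sub>M A) (\<lambda>(x, y). (y, x))) B fst"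
    by (subst distr_distr) (auto intro!: distr_cong)
  also have "\<dots> = distr (B \<Otimes>\<^sub>M A) B fst"
    by (subst BA.distr_pair_swap[symmetric]) simp
  also have "\<dots> = B" by (rule marg_fst) (use assms in auto)
  finally show ?thesis .
qed

lemma min_normal:
  fixes \<mu> \<sigma> :: real
  assumes sp: "0 < \<sigma>"
  defines "N \<equiv> density lborel (\<lambda>x. ennreal (normal_density \<mu> \<sigma> x))"
  shows "integrable (N \<Otimes>\<^sub>M N) (\<lambda>\<omega>. min (fst \<omega>) (snd \<omega>))"
    and "(\<integral>\<omega>. min (fst \<omega>) (snd \<omega>) \<partial>(N \<Otimes>\<^sub>M N)) = \<mu> - \<sigma> / sqrt pi"
proof -
  have Nax: "prob_space N" unfolding N_def by (rule prob_space_normal_density[OF sp])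
  have PPax: "prob_space (N \<Otimes>\<^sub>M N)" by (simp add: Nax prob_space_pair)
  have setsN: "sets N = sets lborel" unfolding N_def by simp
  have setsP: "sets (N \<Otimes>\<^sub>M N) = sets (borel \<Otimes>\<^sub>M borel)"
    by (rule sets_pair_measure_cong) (simp_all add: setsN)
  have mfst: "fst \<in> measurable (N \<Otimes>\<^sub>M N) lborel"
    using measurable_fst[of N N] by (simp add: measurable_cong_sets[OF refl setsN])
  have msnd: "snd \<in> measurable (N \<Otimes>\<^sub>M N) lborel"
    using measurable_snd[of N N] by (simp add: measurable_cong_sets[OF refl setsN])
  have dfst: "distr (N \<Otimes>\<^sub>M N) lborel fst = N"
    using marg_fst[OF Nax Nax] distr_cong[OF refl setsN[symmetric], where f=fst and g=fst] by metis
  have dsnd: "distr (N \<Otimes>\<^sub>M N) lborel snd = N"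
    using marg_snd[OF Nax Nax] distr_cong[OF refl setsN[symmetric], where f=snd and g=snd] by metis
  have Xd: "distributed (N \<Otimes>\<^sub>M N) lborel fst (normal_density \<mu> \<sigma>)"
    unfolding distributed_def using dfst mfst by (simp add: N_def)
  have Yd: "distributed (N \<Otimes>\<^sub>M N) lborel snd (normal_density \<mu> \<sigma>)"
    unfolding distributed_def using dsnd msnd by (simp add: N_def)
  have ind: "prob_space.indep_var (N \<Otimes>\<^sub>M N) borel fst borel snd"
  proof (subst prob_space.indep_var_distribution_eq[OF PPax], intro conjI)
    show "fst \<in> measurable (N \<Otimes>\<^sub>M N) borel" using mfst by simp
    show "snd \<in> measurable (N \<Otimes>\<^sub>M N) borel" using msnd by simp
    have "distr (N \<Otimes>\<^sub>M N) borel fst = N" using dfst by (metis distr_cong sets_lborel)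
    moreover have "distr (N \<Otimes>\<^sub>M N) borel snd = N" using dsnd by (metis distr_cong sets_lborel)
    moreover have "distr (N \<Otimes>\<^sub>M N) (borel \<Otimes>\<^sub>M borel) (\<lambda>x. (fst x, snd x)) = N \<Otimes>\<^sub>M N"
      using distr_id2[OF setsP[symmetric]] by simp
    ultimately show "distr (N \<Otimes>\<^sub>M N) borel fst \<Otimes>\<^sub>M distr (N \<Otimes>\<^sub>M N) borel snd =
       distr (N \<Otimes>\<^sub>M N) (borel \<Otimes>\<^sub>M borel) (\<lambda>x. (fst x, snd x))" by simp
  qed
  have Dd: "distributed (N \<Otimes>\<^sub>M N) lborel (\<lambda>x. fst x - snd x) (normal_density (\<mu> - \<mu>) (sqrt (\<sigma>\<^sup>2 + \<sigma>\<^sup>2)))"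
    by (rule prob_space.diff_indep_normal[OF PPax ind sp sp Xd Yd])
  define s where "s = sqrt (\<sigma>\<^sup>2 + \<sigma>\<^sup>2)"
  have s_pos: "0 < s" unfolding s_def using sp by simp
  have Dd': "distributed (N \<Otimes>\<^sub>M N) lborel (\<lambda>x. fst x - snd x) (normal_density 0 s)"
    using Dd by (simp add: s_def)
  have i1: "integrable (N \<Otimes>\<^sub>M N) fst"
    using distributed_integrable[OF Xd, of "\<lambda>x. x"] integrable_normal_moment_nz_1[OF sp, of \<mu>] by simp
  have i2: "integrable (N \<Otimes>\<^sub>M N) snd"
    using distributed_integrable[OF Yd, of "\<lambda>x. x"] integrable_normal_moment_nz_1[OF sp, of \<mu>] by simp
  have i3: "integrable (N \<Otimes>\<^sub>M N) (\<lambda>x. \<bar>fst x - snd x\<bar>)"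
    using distributed_integrable[OF Dd', of "\<lambda>x. \<bar>x\<bar>"] integrable_normal_moment_abs[OF s_pos, of 0 1] by simp
  have e1: "(\<integral>x. fst x \<partial>(N \<Otimes>\<^sub>M N)) = \<mu>"
    using distributed_integral[OF Xd, of "\<lambda>x. x"] integral_normal_moment_nz_1[OF sp, of \<mu>] by simp
  have e2: "(\<integral>x. snd x \<partial>(N \<Otimes>\<^sub>M N)) = \<mu>"
    using distributed_integral[OF Yd, of "\<lambda>x. x"] integral_normal_moment_nz_1[OF sp, of \<mu>] by simp
  have e3: "(\<integral>x. \<bar>fst x - snd x\<bar> \<partial>(N \<Otimes>\<^sub>M N)) = s * sqrt (2 / pi)"
    using distributed_integral[OF Dd', of "\<lambda>x. \<bar>x\<bar>"] integral_normal_moment_abs_odd[OF s_pos, of 0 0] by simp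
  have mineq: "(\<lambda>\<omega>::real\<times>real. min (fst \<omega>) (snd \<omega>)) = (\<lambda>\<omega>. (fst \<omega> + snd \<omega>) / 2 - \<bar>fst \<omega> - snd \<omega>\<bar> / 2)"
    by (auto simp: min_def abs_if fun_eq_iff field_simps)
  show "integrable (N \<Otimes>\<^sub>M N) (\<lambda>\<omega>. min (fst \<omega>) (snd \<omega>))"
    unfolding mineq using i1 i2 i3 by auto
  have "(\<integral>\<omega>. min (fst \<omega>) (snd \<omega>) \<partial>(N \<Otimes>\<^sub>M N)) = (\<mu> + \<mu>) / 2 - s * sqrt (2 / pi) / 2"
    unfolding mineq using i1 i2 i3 e1 e2 e3 by simp
  also have "\<dots> = \<mu> - \<sigma> / sqrt pi"
  proof -
    have "s = sqrt 2 * \<sigma>" unfolding s_def using sp by (simp add: real_sqrt_mult)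
    hence "s * sqrt (2 / pi) = 2 * \<sigma> / sqrt pi"
      by (simp add: real_sqrt_divide)
    thus ?thesis by simp
  qed
  finally show "(\<integral>\<omega>. min (fst \<omega>) (snd \<omega>) \<partial>(N \<Otimes>\<^sub>M N)) = \<mu> - \<sigma> / sqrt pi" .
qed

lemma geom1_facts:
  assumes "0 < \<beta>" "\<beta> < 1"
  shows "integrable (geom1 \<beta>) real" "(\<integral>n. real n \<partial>geom1 \<beta>) = 1 / \<beta>"
proof -
  have ig: "integrable (geometric_pmf \<beta>) real"
    using integrable_real_geometric_pmf[of \<beta>] assms by simp
  have eg: "(\<integral>n. real n \<partial>geometric_pmf \<beta>) = (1 - \<beta>) / \<beta>"
    using expectation_geometric_pmf[of \<beta>] assms by simp
  have ig2: "integrable (geometric_pmf \<beta>) (\<lambda>n. 1 + real n)"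
    using ig by simp
  show "integrable (geom1 \<beta>) real"
    unfolding geom1_def using ig2 by simp
  have "(\<integral>n. real n \<partial>geom1 \<beta>) = (\<integral>n. 1 + real n \<partial>geometric_pmf \<beta>)"
    unfolding geom1_def by simp
  also have "\<dots> = 1 + (1 - \<beta>) / \<beta>"
    using ig eg by (simp add: measure_pmf.prob_space)
  also have "\<dots> = 1 / \<beta>" using assms by (simp add: field_simps)
  finally show "(\<integral>n. real n \<partial>geom1 \<beta>) = 1 / \<beta>" .
qed

lemma sigma0_pos:
  assumes "2 \<le> M" "0 < \<beta>" "\<beta> < 1"
  shows "0 < sigma0 M \<beta>"
proof -
  have M2: "2 \<le> real M" using assms by simp
  have "0 < (real M - 1) * (2 * real M - 1) / (1 - \<beta>)"
    using M2 assms by (intro divide_pos_pos mult_pos_pos) auto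
  moreover have "mu0 M \<beta> = (real M - 1) * (2 * real M - 1) / (1 - \<beta>)"
    unfolding mu0_def C_par_def by simp
  ultimately have "0 < mu0 M \<beta>" by simp
  moreover have "1 < inverse (C_par M \<beta>)" using assms unfolding C_par_def by (auto simp: field_simps)
  ultimately show ?thesis unfolding sigma0_def by simp
qed

lemma EZ_formula:
  assumes "2 \<le> M" "0 < \<beta>" "\<beta> < 1"
  shows "EZhat0 M \<beta> = 1 / \<beta> + mu0 M \<beta> - sigma0 M \<beta> / sqrt pi"
proof -
  define N where "N = normal0 M \<beta>"
  define G where "G = geom1 \<beta>"
  have sp: "0 < sigma0 M \<beta>" by (rule sigma0_pos[OF assms])
  have Nax: "prob_space N" unfolding N_def normal0_def by (rule prob_space_normal_density[OF sp])
  have Pax: "prob_space (N \<Otimes>\<^sub>M N)" by (simp add: Nax prob_space_pair)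
  have Gax: "prob_space G" unfolding G_def geom1_def by (rule prob_space_measure_pmf)
  note mn = min_normal[OF sp, of "mu0 M \<beta>", folded normal0_def, folded N_def]
  note gf = geom1_facts[OF assms(2,3), folded G_def]
  have d1: "distr (G \<Otimes>\<^sub>M (N \<Otimes>\<^sub>M N)) G fst = G" by (rule marg_fst[OF Gax Pax])
  have d2: "distr (G \<Otimes>\<^sub>M (N \<Otimes>\<^sub>M N)) (N \<Otimes>\<^sub>M N) snd = N \<Otimes>\<^sub>M N" by (rule marg_snd[OF Gax Pax])
  have mh: "(\<lambda>\<omega>::real\<times>real. min (fst \<omega>) (snd \<omega>)) \<in> borel_measurable (N \<Otimes>\<^sub>M N)"
    using borel_measurable_integrable[OF mn(1)] .
  have mr: "(real :: nat \<Rightarrow> real) \<in> borel_measurable G"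
    unfolding G_def geom1_def by simp
  have i1: "integrable (G \<Otimes>\<^sub>M (N \<Otimes>\<^sub>M N)) (\<lambda>\<omega>. real (fst \<omega>))"
    using integrable_distr_eq[OF measurable_fst[of G "N \<Otimes>\<^sub>M N"] mr] gf(1) d1 by simp
  have e1: "(\<integral>\<omega>. real (fst \<omega>) \<partial>(G \<Otimes>\<^sub>M (N \<Otimes>\<^sub>M N))) = 1 / \<beta>"
    using integral_distr[OF measurable_fst[of G "N \<Otimes>\<^sub>M N"] mr] gf(2) d1 by simp
  have i2: "integrable (G \<Otimes>\<^sub>M (N \<Otimes>\<^sub>M N)) (\<lambda>\<omega>. min (fst (snd \<omega>)) (snd (snd \<omega>)))"
    using integrable_distr_eq[OF measurable_snd[of G "N \<Otimes>\<^sub>M N"] mh] mn(1) d2 by simp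
  have e2: "(\<integral>\<omega>. min (fst (snd \<omega>)) (snd (snd \<omega>)) \<partial>(G \<Otimes>\<^sub>M (N \<Otimes>\<^sub>M N))) = mu0 M \<beta> - sigma0 M \<beta> / sqrt pi"
    using integral_distr[OF measurable_snd[of G "N \<Otimes>\<^sub>M N"] mh] mn(2) d2 by simp
  have "EZhat0 M \<beta> = (\<integral>\<omega>. real (fst \<omega>) + min (fst (snd \<omega>)) (snd (snd \<omega>)) \<partial>(G \<Otimes>\<^sub>M (N \<Otimes>\<^sub>M N)))"
  proof -
    have "Zhat0 = (\<lambda>\<omega>. real (fst \<omega>) + min (fst (snd \<omega>)) (snd (snd \<omega>)))"
      by (auto simp: Zhat0_def fun_eq_iff split: prod.split)
    thus ?thesis unfolding EZhat0_def Z0_space_def G_def N_def by simp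
  qed
  also have "\<dots> = 1 / \<beta> + (mu0 M \<beta> - sigma0 M \<beta> / sqrt pi)"
    using i1 i2 e1 e2 by simp
  finally show ?thesis by simp
qed

definition aa :: "nat \<Rightarrow> real" where "aa M = (real M - 1) * (2 * real M - 1)"
definition SS :: "nat \<Rightarrow> real" where "SS M = sqrt (aa M * (2 * real M - 1)) / sqrt pi"
definition SS0 :: "nat \<Rightarrow> real" where "SS0 M = sqrt (aa M * (2 * real M - 2)) / sqrt pi"
definition alph :: "nat \<Rightarrow> real" where "alph M = (aa M - SS M) / (real M)\<^sup>2"
definition RR :: "nat \<Rightarrow> real" where
  "RR M = (real M / (sqrt 2 / 2) + (aa M - SS0 M) / (1 - (sqrt 2 / 2) / real M) - (aa M - SS M)) / real M"

lemma alph_lim: "alph \<longlonglongrightarrow> 2"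
  unfolding alph_def SS_def aa_def by real_asymp

lemma RR_lim: "RR \<longlonglongrightarrow> 2 * sqrt 2"
  unfolding RR_def SS_def SS0_def aa_def
  by real_asymp (simp flip: sqrt_def add: real_div_sqrt)

lemma EZ_explicit:
  assumes "2 \<le> M" "0 < \<beta>" "\<beta> < 1"
  shows "EZhat0 M \<beta> = 1 / \<beta> + (aa M - sqrt (aa M * (2 * real M - 2 + \<beta>)) / sqrt pi) / (1 - \<beta>)"
proof -
  have M2: "2 \<le> real M" using assms by simp
  have h: "2 * real M - 1 \<noteq> 0" using M2 by simp
  have mu: "mu0 M \<beta> = aa M / (1 - \<beta>)"
    unfolding mu0_def C_par_def aa_def using h by simp
  have ic: "inverse (C_par M \<beta>) - 1 = (2 * real M - 2 + \<beta>) / (1 - \<beta>)"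
    unfolding C_par_def using h assms by (simp add: field_simps)
  have "mu0 M \<beta> * (inverse (C_par M \<beta>) - 1) = (aa M * (2 * real M - 2 + \<beta>)) / (1 - \<beta>)\<^sup>2"
    unfolding mu ic by (simp add: power2_eq_square)
  hence sg: "sigma0 M \<beta> = sqrt (aa M * (2 * real M - 2 + \<beta>)) / (1 - \<beta>)"
    unfolding sigma0_def using assms by (simp add: real_sqrt_divide)
  show ?thesis unfolding EZ_formula[OF assms] mu sg
    by (simp add: diff_divide_distrib divide_divide_eq_left mult.commute)
qed

lemma SS_lt_aa:
  assumes "2 \<le> M" shows "SS M < aa M"
proof -
  have M2: "2 \<le> real M" using assms by simp
  have apos: "0 < aa M" unfolding aa_def using M2 by (intro mult_pos_pos) auto
  have "1 * pi \<le> (real M - 1) * pi" using M2 pi_gt_zero by (intro mult_right_mono) auto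
  hence p1: "1 < (real M - 1) * pi" using pi_gt3 by linarith
  have "(2 * real M - 1) * 1 < (2 * real M - 1) * ((real M - 1) * pi)"
    using M2 p1 by (intro mult_strict_left_mono) auto
  hence "2 * real M - 1 < aa M * pi" unfolding aa_def by (simp add: mult_ac)
  hence "aa M * (2 * real M - 1) < aa M * (aa M * pi)" using apos by simp
  hence "sqrt (aa M * (2 * real M - 1)) < sqrt (aa M * (aa M * pi))" by simp
  also have "sqrt (aa M * (aa M * pi)) = aa M * sqrt pi" using apos
    by (simp add: real_sqrt_mult)
  finally show ?thesis unfolding SS_def by (simp add: divide_less_eq)
qed

lemma EZ_lower:
  assumes "2 \<le> M" "0 < \<beta>" "\<beta> < 1"
  shows "1 / \<beta> + (aa M - SS M) * (1 + \<beta>) \<le> EZhat0 M \<beta>"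
proof -
  have M2: "2 \<le> real M" using assms by simp
  have apos: "0 < aa M" unfolding aa_def using M2 by (intro mult_pos_pos) auto
  have "sqrt (aa M * (2 * real M - 2 + \<beta>)) \<le> sqrt (aa M * (2 * real M - 1))"
    using apos assms by simp
  hence q: "sqrt (aa M * (2 * real M - 2 + \<beta>)) / sqrt pi \<le> SS M"
    unfolding SS_def by (simp add: divide_right_mono)
  have d: "0 \<le> aa M - SS M" using SS_lt_aa[OF assms(1)] by simp
  have "(aa M - SS M) * (1 + \<beta>) \<le> (aa M - SS M) / (1 - \<beta>)"
  proof -
    have e: "(aa M - SS M) * (1 + \<beta>) * (1 - \<beta>) = (aa M - SS M) - (aa M - SS M) * (\<beta> * \<beta>)"
      by (simp add: algebra_simps)
    have "0 \<le> (aa M - SS M) * (\<beta> * \<beta>)" using d by simp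
    hence "(aa M - SS M) * (1 + \<beta>) * (1 - \<beta>) \<le> (aa M - SS M)" unfolding e by linarith
    thus ?thesis using assms by (simp add: le_divide_eq)
  qed
  also have "\<dots> \<le> (aa M - sqrt (aa M * (2 * real M - 2 + \<beta>)) / sqrt pi) / (1 - \<beta>)"
    using q assms by (intro divide_right_mono) auto
  finally show ?thesis unfolding EZ_explicit[OF assms] by simp
qed

lemma EZ_upper:
  assumes "2 \<le> M" "0 < \<beta>" "\<beta> < 1"
  shows "EZhat0 M \<beta> \<le> 1 / \<beta> + (aa M - SS0 M) / (1 - \<beta>)"
proof -
  have M2: "2 \<le> real M" using assms by simp
  have apos: "0 < aa M" unfolding aa_def using M2 by (intro mult_pos_pos) auto
  have "sqrt (aa M * (2 * real M - 2)) \<le> sqrt (aa M * (2 * real M - 2 + \<beta>))"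
    using apos assms by simp
  hence q: "SS0 M \<le> sqrt (aa M * (2 * real M - 2 + \<beta>)) / sqrt pi"
    unfolding SS0_def by (simp add: divide_right_mono)
  have "(aa M - sqrt (aa M * (2 * real M - 2 + \<beta>)) / sqrt pi) / (1 - \<beta>) \<le> (aa M - SS0 M) / (1 - \<beta>)"
    using q assms by (intro divide_right_mono) auto
  thus ?thesis unfolding EZ_explicit[OF assms] by simp
qed

lemma key_ineq:
  assumes M: "2 \<le> M" and b: "0 < b" "b < 1"
    and mn: "\<forall>\<beta>\<in>{0<..<1}. EZhat0 M b \<le> EZhat0 M \<beta>"
  shows "1 / (real M * b) + alph M * (real M * b) \<le> RR M"
proof -
  define c :: real where "c = sqrt 2 / 2"
  have M2: "2 \<le> real M" using M by simp
  have c0: "0 < c" unfolding c_def by simp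
  have s4: "sqrt 4 = (2::real)" using real_sqrt_abs[of "2::real"] by simp
  have "sqrt 2 < sqrt (4::real)" by (simp only: real_sqrt_less_iff)
  hence "sqrt 2 < 2" using s4 by linarith
  hence c1: "c < 1" unfolding c_def by simp
  have b0: "0 < c / real M" "c / real M < 1" using c0 c1 M2 by (auto simp: divide_less_eq)
  have "1 / b + (aa M - SS M) * (1 + b) \<le> EZhat0 M b" by (rule EZ_lower[OF M b])
  also have "\<dots> \<le> EZhat0 M (c / real M)" using mn b0 by auto
  also have "\<dots> \<le> 1 / (c / real M) + (aa M - SS0 M) / (1 - c / real M)" by (rule EZ_upper[OF M b0])
  finally have ineq: "1 / b + (aa M - SS M) * b \<le> real M / c + (aa M - SS0 M) / (1 - c / real M) - (aa M - SS M)"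
    by (simp add: algebra_simps)
  have Mpos: "0 < real M" using M2 by simp
  have "1 / (real M * b) + alph M * (real M * b) = (1 / b + (aa M - SS M) * b) / real M"
    unfolding alph_def using Mpos b by (simp add: field_simps power2_eq_square)
  also have "\<dots> \<le> (real M / c + (aa M - SS0 M) / (1 - c / real M) - (aa M - SS M)) / real M"
    using ineq Mpos by (simp add: divide_right_mono)
  also have "\<dots> = RR M" unfolding RR_def c_def ..
  finally show ?thesis .
qed

lemma part2:
  assumes H: "\<forall>M\<ge>2. 0 < bstar M \<and> bstar M < 1 \<and>
                   (\<forall>\<beta>\<in>{0<..<1}. EZhat0 M (bstar M) \<le> EZhat0 M \<beta>)"
  shows "(\<lambda>M. real M * bstar M) \<longlonglongrightarrow> sqrt 2 / 2"
proof -
  define x where "x M = real M * bstar M" for M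
  define u where "u M = sqrt (alph M) * x M - 1" for M
  define E where "E M = (RR M / alph M) * (RR M - 2 * sqrt (alph M))" for M
  have bound: "(u M)\<^sup>2 \<le> E M" "0 < alph M" "0 < x M" if M: "2 \<le> M" for M
  proof -
    have b: "0 < bstar M" "bstar M < 1" and mn: "\<forall>\<beta>\<in>{0<..<1}. EZhat0 M (bstar M) \<le> EZhat0 M \<beta>"
      using H M by auto
    have ki: "1 / x M + alph M * x M \<le> RR M" unfolding x_def by (rule key_ineq[OF M b mn])
    have M2: "2 \<le> real M" using M by simp
    show ap: "0 < alph M" unfolding alph_def using SS_lt_aa[OF M] M2 by simp
    show xp: "0 < x M" unfolding x_def using b M2 by simp
    have sq: "sqrt (alph M) * sqrt (alph M) = alph M" using ap by simp
    have ue: "(u M)\<^sup>2 = x M * (1 / x M + alph M * x M - 2 * sqrt (alph M))"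
      unfolding u_def power2_eq_square using xp sq by (simp add: field_simps)
    have u1: "(u M)\<^sup>2 \<le> x M * (RR M - 2 * sqrt (alph M))"
      unfolding ue using xp ki by (intro mult_left_mono) auto
    have nn: "0 \<le> RR M - 2 * sqrt (alph M)"
    proof (rule ccontr)
      assume "\<not> ?thesis"
      hence "x M * (RR M - 2 * sqrt (alph M)) < 0" using xp by (simp add: mult_pos_neg)
      moreover have "0 \<le> (u M)\<^sup>2" by simp
      ultimately show False using u1 by linarith
    qed
    have "0 < 1 / x M" using xp by simp
    hence "alph M * x M \<le> RR M" using ki by linarith
    hence xb: "x M \<le> RR M / alph M" using ap by (simp add: le_divide_eq mult.commute)
    have "x M * (RR M - 2 * sqrt (alph M)) \<le> (RR M / alph M) * (RR M - 2 * sqrt (alph M))"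
      using xb nn by (rule mult_right_mono)
    thus "(u M)\<^sup>2 \<le> E M" using u1 unfolding E_def by linarith
  qed
  have ev: "eventually (\<lambda>M. 2 \<le> M) sequentially" by (rule eventually_ge_at_top)
  have El: "E \<longlonglongrightarrow> (2 * sqrt 2 / 2) * (2 * sqrt 2 - 2 * sqrt 2)"
    unfolding E_def by (intro tendsto_intros RR_lim alph_lim) auto
  hence El0: "E \<longlonglongrightarrow> 0" by simp
  have "(\<lambda>M. (u M)\<^sup>2) \<longlonglongrightarrow> 0"
  proof (rule tendsto_sandwich[OF _ _ tendsto_const El0])
    show "eventually (\<lambda>M. 0 \<le> (u M)\<^sup>2) sequentially" by simp
    show "eventually (\<lambda>M. (u M)\<^sup>2 \<le> E M) sequentially"
      using ev by (rule eventually_mono) (use bound in auto)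
  qed
  hence "(\<lambda>M. sqrt ((u M)\<^sup>2)) \<longlonglongrightarrow> sqrt 0" by (rule tendsto_real_sqrt)
  hence "(\<lambda>M. \<bar>u M\<bar>) \<longlonglongrightarrow> 0" by simp
  hence ul: "u \<longlonglongrightarrow> 0" by (simp add: tendsto_rabs_zero_iff)
  have lim1: "(\<lambda>M. (u M + 1) / sqrt (alph M)) \<longlonglongrightarrow> (0 + 1) / sqrt 2"
    by (intro tendsto_intros ul alph_lim) auto
  have lim2: "(0 + 1) / sqrt 2 = sqrt 2 / (2::real)"
    by (simp add: field_simps flip: real_sqrt_mult)
  have ev3: "eventually (\<lambda>M. (u M + 1) / sqrt (alph M) = x M) sequentially"
  proof (rule eventually_mono[OF ev])
    fix M :: nat assume "2 \<le> M"
    hence "0 < sqrt (alph M)" using bound(2) by simp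
    thus "(u M + 1) / sqrt (alph M) = x M" unfolding u_def by simp
  qed
  have "x \<longlonglongrightarrow> (0 + 1) / sqrt 2"
    using tendsto_cong[OF ev3] lim1 by blast
  hence "x \<longlonglongrightarrow> sqrt 2 / 2" unfolding lim2 .
  thus ?thesis unfolding x_def .
qed

theorem mainTheorem5:
  shows "(\<forall>(M::nat) (\<beta>::real). 2 \<le> M \<longrightarrow> 0 < \<beta> \<longrightarrow> \<beta> < 1 \<longrightarrow>
            EZhat0 M \<beta> = 1 / \<beta> + mu0 M \<beta> - sigma0 M \<beta> / sqrt pi)
       \<and> (\<forall>bstar :: nat \<Rightarrow> real.
            (\<forall>M\<ge>2. 0 < bstar M \<and> bstar M < 1 \<and>
                   (\<forall>\<beta>\<in>{0<..<1}. EZhat0 M (bstar M) \<le> EZhat0 M \<beta>))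
            \<longrightarrow> (\<lambda>M. real M * bstar M) \<longlonglongrightarrow> sqrt 2 / 2)"
  using EZ_formula part2 by blast

end
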